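(* Consider the random-subspace algorithm described in the context, and suppose that (i) the model Hessians are uniformly bounded, $\|\hat{H}_k\|\leq \kappa_H$ for all $k$, for some $\kappa_H\geq 1$; and (ii) at every iteration the computed step satisfies $$\hat{m}_k(\mathbf{0}) - \hat{m}_k(\hat{\mathbf{s}}_k) \geq \kappa_s \max\left(\|\hat{\mathbf{g}}_k\| \min\left(\Delta_k, \frac{\|\hat{\mathbf{g}}_k\|}{\max(\|\hat{H}_k\|,1)}\right), \hat{\tau}^m_k\Delta_k^2\right)$$ for some $\kappa_s>0$ independent of $k$. If at some iteration $k$ $$\Delta_k \leq c_0\, \hat{\sigma}^m_k, \qquad \text{where} \qquad c_0 := \min\left(\frac{1}{\mu}, \frac{1}{\kappa_H}, \frac{\kappa_s (1-\eta)}{\kappa_{\mathrm{ef}} \Delta_{\max}}, \frac{\kappa_s (1-\eta)}{\kappa_{\mathrm{ef}}}\right),$$ then iteration $k$ is successful, i.e. $R_k\geq \eta$ and $\hat{\sigma}^m_k\geq \mu\Delta_k$.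
   Context: Let $f:\mathbb{R}^n\to\mathbb{R}$. Fix $\mathbf{x}_0\in\mathbb{R}^n$, a subspace dimension $p\in\{1,\ldots,n\}$, radii $0<\Delta_0\leq\Delta_{\max}$, and parameters $0<\gamma_{\mathrm{dec}}<1<\gamma_{\mathrm{inc}}$, $\eta\in(0,1)$, $\mu>0$. For $k=0,1,2,\ldots$ the algorithm: (1) selects a random matrix $P_k\in\mathbb{R}^{n\times p}$; (2) builds a model $\hat{m}_k(\hat{\mathbf{s}}) = f(\mathbf{x}_k)+\hat{\mathbf{g}}_k^T\hat{\mathbf{s}}+\frac12\hat{\mathbf{s}}^T\hat{H}_k\hat{\mathbf{s}}$ ($\hat{\mathbf{g}}_k\in\mathbb{R}^p$, $\hat H_k\in\mathbb{R}^{p\times p}$ symmetric) that is $P_k$-fully quadratic, meaning there are constants $\kappa_{\mathrm{ef}},\kappa_{\mathrm{eg}},\kappa_{\mathrm{eh}}>0$ independent of $k$ with $|f(\mathbf{x}_k+P_k\hat{\mathbf{s}})-\hat m_k(\hat{\mathbf{s}})|\leq\kappa_{\mathrm{ef}}\Delta_k^3$, $\|P_k^T\nabla f(\mathbf{x}_k+P_k\hat{\mathbf{s}})-\nabla\hat m_k(\hat{\mathbf{s}})\|\leq\kappa_{\mathrm{eg}}\Delta_k^2$, $\|P_k^T\nabla^2 f(\mathbf{x}_k+P_k\hat{\mathbf{s}})P_k-\nabla^2\hat m_k(\hat{\mathbf{s}})\|\leq\kappa_{\mathrm{eh}}\Delta_k$ for all $\|\hat{\mathbf{s}}\|\leq\Delta_k$;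 (3) computes a step $\hat{\mathbf{s}}_k\in\mathbb{R}^p$ with $\|\hat{\mathbf{s}}_k\|\leq\Delta_k$ (approximately minimizing $\hat m_k$ on this ball); (4) computes $R_k := \frac{f(\mathbf{x}_k)-f(\mathbf{x}_k+P_k\hat{\mathbf{s}}_k)}{\hat m_k(\mathbf{0})-\hat m_k(\hat{\mathbf{s}}_k)}$; (5) with $\hat\tau^m_k:=\max(-\lambda_{\min}(\hat H_k),0)$ and $\hat\sigma^m_k:=\max(\|\hat{\mathbf{g}}_k\|,\hat\tau^m_k)$, iteration $k$ is successful if $R_k\geq\eta$ and $\hat\sigma^m_k\geq\mu\Delta_k$, in which case $\mathbf{x}_{k+1}=\mathbf{x}_k+P_k\hat{\mathbf{s}}_k$ and $\Delta_{k+1}=\min(\gamma_{\mathrm{inc}}\Delta_k,\Delta_{\max})$; otherwise it is unsuccessful, $\mathbf{x}_{k+1}=\mathbf{x}_k$ and $\Delta_{k+1}=\gamma_{\mathrm{dec}}\Delta_k$. Norms are Euclidean / operator 2-norms. *)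

theory Defs
  imports "HOL-Analysis.Analysis"
begin

definition qmodel :: "real \<Rightarrow> real^'p \<Rightarrow> real^'p^'p \<Rightarrow> real^'p \<Rightarrow> real" where
  "qmodel fx g H s = fx + g \<bullet> s + (1/2) * (s \<bullet> (H *v s))"

definition lambda_min :: "real^'p^'p \<Rightarrow> real" where
  "lambda_min H = Min {l. \<exists>v. v \<noteq> 0 \<and> H *v v = l *\<^sub>R v}"

definition tau_m :: "real^'p^'p \<Rightarrow> real" where
  "tau_m H = max (- lambda_min H) 0"

definition sigma_m :: "real^'p \<Rightarrow> real^'p^'p \<Rightarrow> real" where
  "sigma_m g H = max (norm g) (tau_m H)"

definition mnorm :: "real^'c^'r \<Rightarrow> real" where
  "mnorm A = onorm (\<lambda>v. A *v v)"

end

theory Submission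
  imports Defs
begin

theorem lemma3p5:
  fixes f :: "real^'n \<Rightarrow> real"
    and gradf :: "real^'n \<Rightarrow> real^'n"
    and hessf :: "real^'n \<Rightarrow> real^'n^'n"
    and x :: "nat \<Rightarrow> real^'n"
    and P :: "nat \<Rightarrow> real^'p^'n"
    and g :: "nat \<Rightarrow> real^'p"
    and H :: "nat \<Rightarrow> real^'p^'p"
    and s :: "nat \<Rightarrow> real^'p"
    and \<Delta> :: "nat \<Rightarrow> real"
    and x0 :: "real^'n"
    and \<Delta>0 \<Delta>max \<gamma>dec \<gamma>inc \<eta> \<mu> \<kappa>ef \<kappa>eg \<kappa>eh \<kappa>H \<kappa>s :: real
    and R :: "nat \<Rightarrow> real"
    and k :: nat
  assumes p_le_n: "CARD('p) \<le> CARD('n)"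
    and grad: "\<And>y. (f has_derivative (\<lambda>h. gradf y \<bullet> h)) (at y)"
    and hess: "\<And>y. (gradf has_derivative (\<lambda>h. hessf y *v h)) (at y)"
    and radii: "0 < \<Delta>0" "\<Delta>0 \<le> \<Delta>max"
    and gammas: "0 < \<gamma>dec" "\<gamma>dec < 1" "1 < \<gamma>inc"
    and eta: "0 < \<eta>" "\<eta> < 1"
    and mu: "0 < \<mu>"
    and kappas: "0 < \<kappa>ef" "0 < \<kappa>eg" "0 < \<kappa>eh"
    and init: "x 0 = x0" "\<Delta> 0 = \<Delta>0"
    and Hsym: "\<And>j. transpose (H j) = H j"
    and fq_f: "\<And>j sh. norm sh \<le> \<Delta> j \<Longrightarrow>
       \<bar>f (x j + P j *v sh) - qmodel (f (x j)) (g j) (H j) sh\<bar> \<le> \<kappa>ef * \<Delta> j ^ 3"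
    and fq_g: "\<And>j sh. norm sh \<le> \<Delta> j \<Longrightarrow>
       norm (transpose (P j) *v gradf (x j + P j *v sh) - (g j + H j *v sh)) \<le> \<kappa>eg * \<Delta> j ^ 2"
    and fq_h: "\<And>j sh. norm sh \<le> \<Delta> j \<Longrightarrow>
       mnorm (transpose (P j) ** hessf (x j + P j *v sh) ** P j - H j) \<le> \<kappa>eh * \<Delta> j"
    and step_tr: "\<And>j. norm (s j) \<le> \<Delta> j"
    and R_def: "\<And>j. R j = (f (x j) - f (x j + P j *v s j)) /
       (qmodel (f (x j)) (g j) (H j) 0 - qmodel (f (x j)) (g j) (H j) (s j))"
    and upd_succ: "\<And>j. R j \<ge> \<eta> \<and> sigma_m (g j) (H j) \<ge> \<mu> * \<Delta> j \<Longrightarrow>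
       x (Suc j) = x j + P j *v s j \<and> \<Delta> (Suc j) = min (\<gamma>inc * \<Delta> j) \<Delta>max"
    and upd_fail: "\<And>j. \<not> (R j \<ge> \<eta> \<and> sigma_m (g j) (H j) \<ge> \<mu> * \<Delta> j) \<Longrightarrow>
       x (Suc j) = x j \<and> \<Delta> (Suc j) = \<gamma>dec * \<Delta> j"
    and kH: "1 \<le> \<kappa>H"
    and Hbound: "\<And>j. mnorm (H j) \<le> \<kappa>H"
    and ks: "0 < \<kappa>s"
    and decrease: "\<And>j. qmodel (f (x j)) (g j) (H j) 0 - qmodel (f (x j)) (g j) (H j) (s j)
       \<ge> \<kappa>s * max (norm (g j) * min (\<Delta> j) (norm (g j) / max (mnorm (H j)) 1))
                    (tau_m (H j) * \<Delta> j ^ 2)"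
    and small: "\<Delta> k \<le> min (min (1/\<mu>) (1/\<kappa>H))
                  (min (\<kappa>s * (1 - \<eta>) / (\<kappa>ef * \<Delta>max)) (\<kappa>s * (1 - \<eta>) / \<kappa>ef))
                * sigma_m (g k) (H k)"
  shows "R k \<ge> \<eta> \<and> sigma_m (g k) (H k) \<ge> \<mu> * \<Delta> k"
proof -
  have inv: "0 < \<Delta> j \<and> \<Delta> j \<le> \<Delta>max" for j
  proof (induction j)
    case 0 then show ?case using init radii by simp
  next
    case (Suc j)
    show ?case
    proof (cases "R j \<ge> \<eta> \<and> sigma_m (g j) (H j) \<ge> \<mu> * \<Delta> j")
      case True
      then have "\<Delta> (Suc j) = min (\<gamma>inc * \<Delta> j) \<Delta>max" using upd_succ by blast
      then show ?thesis using Suc gammas radii by auto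
    next
      case False
      then have "\<Delta> (Suc j) = \<gamma>dec * \<Delta> j" using upd_fail by blast
      then show ?thesis using Suc gammas
        by (smt (verit) mult_le_cancel_right1 mult_pos_pos)
    qed
  qed
  define D where "D = \<Delta> k"
  define c where "c = min (min (1/\<mu>) (1/\<kappa>H))
                  (min (\<kappa>s * (1 - \<eta>) / (\<kappa>ef * \<Delta>max)) (\<kappa>s * (1 - \<eta>) / \<kappa>ef))"
  define sg where "sg = sigma_m (g k) (H k)"
  have Dpos: "0 < D" and Dmax: "D \<le> \<Delta>max" using inv D_def by auto
  have sm: "D \<le> c * sg" using small D_def c_def sg_def by simp
  have c1: "c \<le> 1/\<mu>" "c \<le> 1/\<kappa>H" "c \<le> \<kappa>s * (1 - \<eta>) / (\<kappa>ef * \<Delta>max)"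
    "c \<le> \<kappa>s * (1 - \<eta>) / \<kappa>ef" unfolding c_def by auto
  have sgnn: "0 \<le> sg" unfolding sg_def sigma_m_def by (simp add: le_max_iff_disj)
  have sgpos: "0 < sg"
  proof (rule ccontr)
    assume "\<not> 0 < sg" then have "sg = 0" using sgnn by simp
    then show False using sm Dpos by simp
  qed
  have part2: "\<mu> * D \<le> sg"
  proof -
    have "D \<le> sg / \<mu>" using sm c1(1) sgpos by (smt (verit) divide_inverse mult_right_mono mult.commute inverse_eq_divide)
    then show ?thesis using mu by (simp add: field_simps)
  qed
  define Q where "Q = qmodel (f (x k)) (g k) (H k) 0 - qmodel (f (x k)) (g k) (H k) (s k)"
  have dec: "Q \<ge> \<kappa>s * max (norm (g k) * min D (norm (g k) / max (mnorm (H k)) 1))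
                    (tau_m (H k) * D ^ 2)" using decrease[of k] Q_def D_def by simp
  have eta1: "0 < 1 - \<eta>" using eta by simp
  have Qbig: "\<kappa>ef * D ^ 3 \<le> (1 - \<eta>) * Q"
  proof (cases "sg = norm (g k)")
    case True
    have "D \<le> sg / \<kappa>H" using sm c1(2) sgpos kH
      by (smt (verit) divide_inverse mult_right_mono mult.commute inverse_eq_divide)
    also have "\<dots> \<le> norm (g k) / max (mnorm (H k)) 1" using True Hbound[of k] kH sgpos
      by (metis divide_left_mono max.bounded_iff max.cobounded2 norm_ge_zero zero_less_one order_less_le_trans mult_pos_pos)
    finally have m: "min D (norm (g k) / max (mnorm (H k)) 1) = D" by simp
    have Q1: "Q \<ge> \<kappa>s * (norm (g k) * D)" using dec m ks
      by (smt (verit) max.cobounded1 mult_left_mono)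
    have "D \<le> \<kappa>s * (1 - \<eta>) / (\<kappa>ef * \<Delta>max) * sg" using sm c1(3) sgpos
      by (meson mult_right_mono order_trans less_imp_le)
    then have "\<kappa>ef * \<Delta>max * D \<le> \<kappa>s * (1 - \<eta>) * sg" using kappas Dpos Dmax
      by (simp add: field_simps)
    then have "\<kappa>ef * D * D \<le> \<kappa>s * (1 - \<eta>) * sg"
      using kappas Dpos Dmax
      by (smt (verit) mult_left_mono mult_right_mono mult_pos_pos mult.commute mult.assoc)
    then have "\<kappa>ef * D * D * D \<le> \<kappa>s * (1 - \<eta>) * sg * D" using Dpos by simp
    then have "\<kappa>ef * D ^ 3 \<le> (1 - \<eta>) * (\<kappa>s * (norm (g k) * D))" using True
      by (simp add: power3_eq_cube algebra_simps)
    also have "\<dots> \<le> (1 - \<eta>) * Q" using Q1 eta1 by simp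
    finally show ?thesis .
  next
    case False
    have "sg = max (norm (g k)) (tau_m (H k))" by (simp add: sg_def sigma_m_def)
    then have T: "sg = tau_m (H k)" using False by linarith
    have Q1: "Q \<ge> \<kappa>s * (tau_m (H k) * D^2)" using dec ks
      by (smt (verit) max.cobounded2 mult_left_mono)
    have "D \<le> \<kappa>s * (1 - \<eta>) / \<kappa>ef * sg" using sm c1(4) sgpos
      by (meson mult_right_mono order_trans less_imp_le)
    then have "\<kappa>ef * D \<le> \<kappa>s * (1 - \<eta>) * sg" using kappas by (simp add: field_simps)
    then have "\<kappa>ef * D * D^2 \<le> \<kappa>s * (1 - \<eta>) * sg * D^2" using Dpos by simp
    then have "\<kappa>ef * D ^ 3 \<le> (1 - \<eta>) * (\<kappa>s * (tau_m (H k) * D^2))" using T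
      by (simp add: power3_eq_cube power2_eq_square algebra_simps)
    also have "\<dots> \<le> (1 - \<eta>) * Q" using Q1 eta1 by simp
    finally show ?thesis .
  qed
  have "0 < \<kappa>ef * D ^ 3" using kappas Dpos by simp
  then have "0 < (1 - \<eta>) * Q" using Qbig by linarith
  then have Qpos: "0 < Q" using eta1 by (simp add: zero_less_mult_iff)
  have m0: "qmodel (f (x k)) (g k) (H k) 0 = f (x k)" unfolding qmodel_def by simp
  have err: "\<bar>f (x k + P k *v s k) - qmodel (f (x k)) (g k) (H k) (s k)\<bar> \<le> \<kappa>ef * D ^ 3"
    using fq_f[OF step_tr[of k]] D_def by simp
  have Qe: "Q = f (x k) - qmodel (f (x k)) (g k) (H k) (s k)" using Q_def m0 by simp
  have "(1 - \<eta>) * Q = Q - \<eta> * Q" by (simp add: algebra_simps)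
  then have num: "f (x k) - f (x k + P k *v s k) \<ge> \<eta> * Q"
    using err Qbig Qe by linarith
  have "R k = (f (x k) - f (x k + P k *v s k)) / Q" using R_def[of k] Q_def by simp
  then have "R k \<ge> \<eta>" using num Qpos by (simp add: pos_le_divide_eq)
  then show ?thesis using part2 D_def sg_def by simp
qed

end
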